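(* Let $U,V\subseteq\mathbb{R}^n$ be bounded sets, each spanning $\mathbb{R}^n$, and let $\Delta=\sup_{u\in U,v\in V}|\langle u,v\rangle|$. Then there exists an invertible linear operator $L:\mathbb{R}^n\to\mathbb{R}^n$ such that $\|Lu\|_2\le n^{1/4}\sqrt{\Delta}$ for all $u\in U$ and $\|(L^{-1})^Tv\|_2\le n^{1/4}\sqrt{\Delta}$ for all $v\in V$. *)

theory Defs
  imports "HOL-Analysis.Analysis"
begin

end

theory Submission
  imports Defs
begin

lemma minv:
  fixes A :: "real^'n^'n"
  assumes "invertible A"
  shows "A ** matrix_inv A = mat 1" "matrix_inv A ** A = mat 1"
  using someI_ex[OF assms[unfolded invertible_def]] unfolding matrix_inv_def by auto

lemma cont_det: "continuous_on S (\<lambda>A::real^'n^'n. det A)"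
  unfolding det_def by (intro continuous_intros)

lemma cont_mv: "continuous_on S (\<lambda>L::real^'n^'n. norm (L *v u))"
  unfolding matrix_vector_mult_def by (intro continuous_intros)

lemma pow_bound:
  fixes x :: real
  assumes "0 \<le> x" "real n * x < 1"
  shows "(1+x)^n * (1 - real n * x) \<le> 1"
proof -
  have "(1+x)^n \<le> exp x ^ n"
    using assms by (intro power_mono) (auto simp: exp_ge_add_one_self add.commute)
  also have "\<dots> = exp (real n * x)" by (simp add: exp_of_nat_mult)
  finally have a: "(1+x)^n \<le> exp (real n * x)" .
  have b: "1 - real n * x \<le> exp (- (real n * x))"
    using exp_ge_add_one_self[of "- (real n * x)"] by simp
  have "(1+x)^n * (1 - real n * x) \<le> exp (real n * x) * exp (- (real n * x))"
    using assms a b by (intro mult_mono) auto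
  also have "\<dots> = 1" by (simp add: exp_minus)
  finally show ?thesis .
qed

lemma norm_add_sq:
  fixes y e :: "'a::real_inner"
  assumes "norm e = 1"
  shows "(norm (y + s *\<^sub>R e))^2 = (norm y)^2 + 2 * s * (y \<bullet> e) + s^2"
proof -
  have "e \<bullet> e = 1" using assms by (metis norm_eq_1)
  then show ?thesis
    unfolding power2_norm_eq_inner
    by (simp add: inner_add_left inner_add_right inner_commute power2_eq_square algebra_simps)
qed

lemma orth_norm:
  fixes Q :: "real^'n^'n"
  assumes "orthogonal_matrix Q"
  shows "norm (Q *v x) = norm x"
proof -
  have "(Q *v x) \<bullet> (Q *v x) = x \<bullet> x"
    using assms unfolding orthogonal_matrix_def
    by (metis dot_lmul_matrix matrix_vector_mul_assoc matrix_vector_mul_lid transpose_matrix_vector)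
  then show ?thesis by (metis norm_eq)
qed

lemma diag_mv:
  fixes y :: "real^'n"
  shows "(\<chi> i j. if i = j then (if i = k then l * a else l) else 0) *v y
       = l *\<^sub>R (y + ((a - 1) * y$k) *\<^sub>R axis k 1)"
proof -
  have "(\<Sum>j\<in>UNIV. (if i = j then (if i = k then l * a else l) else 0) * y $ j)
        = (if i = k then l * a else l) * y $ i" for i
    by (simp add: if_distrib[of "\<lambda>z. z * _"] sum.delta cong: if_cong)
  then show ?thesis
    by (auto simp: vec_eq_iff matrix_vector_mult_def axis_def algebra_simps)
qed

lemma diag_det:
  "det ((\<chi> i j. if i = j then (if i = k then l * a else l) else 0) :: real^'n^'n) = l ^ CARD('n) * a"
proof -
  have "det ((\<chi> i j. if i = j then (if i = k then l * a else l) else 0) :: real^'n^'n)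
     = (\<Prod>i\<in>UNIV. l * (if i = k then a else 1))"
    by (subst det_diagonal) (auto intro: prod.cong)
  also have "\<dots> = l ^ CARD('n) * a" by (simp add: prod.distrib)
  finally show ?thesis .
qed


theorem corollary6p5:
  fixes U V :: "(real ^ 'n) set"
  assumes "bounded U" and "bounded V"
    and "span U = UNIV" and "span V = UNIV"
  defines "\<Delta> \<equiv> (SUP p\<in>U \<times> V. \<bar>fst p \<bullet> snd p\<bar>)"
  shows "\<exists>L :: real ^ 'n ^ 'n. invertible L \<and>
           (\<forall>u\<in>U. norm (L *v u) \<le> root 4 (real CARD('n)) * sqrt \<Delta>) \<and>
           (\<forall>v\<in>V. norm (transpose (matrix_inv L) *v v) \<le> root 4 (real CARD('n)) * sqrt \<Delta>)"
proof -
  let ?n = "real CARD('n)"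
  obtain BU where BU: "BU > 0" "\<forall>u\<in>U. norm u \<le> BU" using assms(1) bounded_pos by blast
  obtain BV where BV: "BV > 0" "\<forall>v\<in>V. norm v \<le> BV" using assms(2) bounded_pos by blast
  define S where "S = {L::real^'n^'n. \<forall>u\<in>U. norm (L *v u) \<le> 1}"
  have "S = (\<Inter>u\<in>U. {L. norm (L *v u) \<le> 1})" unfolding S_def by auto
  then have clS: "closed S"
    by (auto intro!: closed_INT closed_Collect_le cont_mv continuous_on_const)
  have "\<forall>j. \<exists>b. \<forall>L\<in>S. norm (L *v axis j 1) \<le> b"
  proof
    fix j :: 'n
    have "axis j 1 \<in> span U" using assms(3) by simp
    then obtain T c where T: "finite T" "T \<subseteq> U" "(\<Sum>t\<in>T. c t *\<^sub>R t) = axis j 1"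
      by (auto simp: span_explicit)
    show "\<exists>b. \<forall>L\<in>S. norm (L *v axis j 1) \<le> b"
    proof (intro exI ballI)
      fix L assume L: "L \<in> S"
      have lin: "linear ((*v) L)" by simp
      have "L *v axis j 1 = (\<Sum>t\<in>T. c t *\<^sub>R (L *v t))"
        unfolding T(3)[symmetric] by (simp add: linear_sum[OF lin] linear_cmul[OF lin] o_def)
      also have "norm \<dots> \<le> (\<Sum>t\<in>T. norm (c t *\<^sub>R (L *v t)))" by (rule norm_sum)
      also have "\<dots> \<le> (\<Sum>t\<in>T. \<bar>c t\<bar>)"
      proof (rule sum_mono)
        fix t assume "t \<in> T"
        then have "norm (L *v t) \<le> 1" using L T(2) unfolding S_def by auto
        then show "norm (c t *\<^sub>R (L *v t)) \<le> \<bar>c t\<bar>"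
          by (simp add: mult_left_le)
      qed
      finally show "norm (L *v axis j 1) \<le> (\<Sum>t\<in>T. \<bar>c t\<bar>)" .
    qed
  qed
  then obtain b where b: "\<And>j L. L \<in> S \<Longrightarrow> norm (L *v axis j 1) \<le> b j" by metis
  have bdS: "bounded S"
    unfolding bounded_iff
  proof (intro exI ballI)
    fix L assume L: "L \<in> S"
    have "norm L \<le> (\<Sum>i\<in>UNIV. norm (L$i))" by (simp add: norm_vec_def L2_set_le_sum)
    also have "\<dots> \<le> (\<Sum>i\<in>(UNIV::'n set). \<Sum>j\<in>UNIV. b j)"
    proof (rule sum_mono)
      fix i
      have "norm (L$i) \<le> (\<Sum>j\<in>UNIV. \<bar>L$i$j\<bar>)" by (rule norm_le_l1_cart)
      also have "\<dots> \<le> (\<Sum>j\<in>UNIV. b j)"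
      proof (rule sum_mono)
        fix j
        have "L$i$j = (L *v axis j 1)$i" by (simp add: matrix_vector_mult_basis column_def)
        then have "\<bar>L$i$j\<bar> \<le> norm (L *v axis j 1)" by (metis component_le_norm_cart)
        then show "\<bar>L$i$j\<bar> \<le> b j" using b[OF L, of j] by linarith
      qed
      finally show "norm (L$i) \<le> (\<Sum>j\<in>UNIV. b j)" .
    qed
    finally show "norm L \<le> (\<Sum>i\<in>(UNIV::'n set). \<Sum>j\<in>UNIV. b j)" .
  qed
  have cpS: "compact S" using clS bdS by (simp add: compact_eq_bounded_closed)
  have invI: "invertible (mat 1 :: real^'n^'n)" unfolding invertible_def by (intro exI[of _ "mat 1"]) simp
  have epsS: "(1/BU) *\<^sub>R mat 1 \<in> S"
    unfolding S_def using BU by (auto simp flip: scaleR_matrix_vector_assoc simp: field_simps)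
  then have "S \<noteq> {}" by auto
  then obtain L0 where L0: "L0 \<in> S" "\<And>L. L \<in> S \<Longrightarrow> \<bar>det L\<bar> \<le> \<bar>det L0\<bar>"
    using continuous_attains_sup[OF cpS, of "\<lambda>L. \<bar>det L\<bar>"]
      continuous_on_rabs[OF cont_det] by fastforce
  have "det ((1/BU) *\<^sub>R mat 1 :: real^'n^'n) \<noteq> 0"
    using scalar_invertible[OF _ invI, of "1/BU"] BU invertible_det_nz by auto
  then have "det L0 \<noteq> 0" using L0(2)[OF epsS] by linarith
  then have invL0: "invertible L0" by (simp add: invertible_det_nz)
  define Mi where "Mi = matrix_inv L0"
  have Mi: "L0 ** Mi = mat 1" "Mi ** L0 = mat 1" using minv[OF invL0] unfolding Mi_def by auto
  have bdd: "bdd_above ((\<lambda>p. \<bar>fst p \<bullet> snd p\<bar>) ` (U \<times> V))"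
  proof (rule bdd_aboveI2)
    fix p assume "p \<in> U \<times> V"
    then have "norm (fst p) \<le> BU" "norm (snd p) \<le> BV" using BU BV by auto
    then show "\<bar>fst p \<bullet> snd p\<bar> \<le> BU * BV"
      by (meson Cauchy_Schwarz_ineq2 mult_mono norm_ge_zero order_trans)
  qed
  have Dle: "\<bar>u \<bullet> v\<bar> \<le> \<Delta>" if "u \<in> U" "v \<in> V" for u v
    unfolding \<Delta>_def using cSUP_upper[OF _ bdd, of "(u,v)"] that by auto
  have Une: "U \<noteq> {}" using assms(3) by (metis span_empty UNIV_not_singleton)
  have Vne: "V \<noteq> {}" using assms(4) by (metis span_empty UNIV_not_singleton)
  have D0: "\<Delta> \<ge> 0" using Une Vne Dle by (meson all_not_in_conv abs_ge_zero order_trans)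
  have Dpos: "\<Delta> > 0"
  proof (rule ccontr)
    assume "\<not> \<Delta> > 0"
    then have z: "u \<bullet> v = 0" if "u \<in> U" "v \<in> V" for u v using Dle[OF that] by simp
    have "V \<subseteq> {0}"
    proof
      fix v assume v: "v \<in> V"
      have "orthogonal v v"
        by (rule orthogonal_to_span[of v U]) (auto simp: assms(3) orthogonal_def z[OF _ v] inner_commute)
      then show "v \<in> {0}" by (simp add: orthogonal_def)
    qed
    then have "span V \<subseteq> {0}" by (metis span_mono span_zero span_empty subset_singletonD span_insert_0 order.refl)
    then show False using assms(4) by (metis UNIV_not_singleton subset_singletonD span_zero empty_iff  subset_empty)
  qed
  have key: "norm (transpose Mi *v v) \<le> sqrt ?n * \<Delta>" if v: "v \<in> V" for v
  proof -
    define z where "z = transpose Mi *v v"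
    define r where "r = norm z"
    show ?thesis unfolding z_def[symmetric] r_def[symmetric]
    proof (rule ccontr)
      assume "\<not> r \<le> sqrt ?n * \<Delta>"
      then have rgt: "r > sqrt ?n * \<Delta>" by simp
      have r0: "r > 0" using rgt D0 by (meson le_less_trans mult_nonneg_nonneg real_sqrt_ge_zero of_nat_0_le_iff)
      define w where "w = (1/r) *\<^sub>R z"
      have nw: "norm w = 1" using r0 unfolding w_def r_def by simp
      have tz: "transpose L0 *v z = v"
        unfolding z_def matrix_vector_mul_assoc matrix_transpose_mul[symmetric] Mi(2) by simp
      have inn: "(L0 *v u) \<bullet> z = u \<bullet> v" for u
        by (metis dot_lmul_matrix inner_commute tz transpose_matrix_vector)
      define t where "t = \<Delta> / r"
      have t0: "t \<ge> 0" unfolding t_def using D0 r0 by simp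
      have tb: "\<bar>(L0 *v u) \<bullet> w\<bar> \<le> t" if "u \<in> U" for u
        using Dle[OF that v] r0 unfolding w_def t_def by (simp add: inn divide_right_mono)
      define p where "p = ?n * t^2"
      have p0: "p \<ge> 0" unfolding p_def by simp
      have "(sqrt ?n * \<Delta>)^2 < r^2" using rgt D0 by (intro power_strict_mono) auto
      then have "?n * \<Delta>^2 < r^2" by (simp add: power_mult_distrib)
      then have p1: "p < 1" unfolding p_def t_def using r0 by (simp add: power_divide field_simps)
      define d where "d = (1 - p) / 2"
      have d0: "d > 0" unfolding d_def using p1 by simp
      define a where "a = sqrt (1 + d)"
      define l where "l = 1 / sqrt (1 + d * t^2)"
      have l0: "l > 0" unfolding l_def using d0 by (simp add: add_pos_nonneg)
      obtain k :: 'n where True by simp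
      obtain Q where Q: "orthogonal_matrix Q" "Q *v axis k 1 = w"
        using orthogonal_matrix_exists_basis[OF nw] by metis
      define D where "D = (\<chi> i j. if i = j then (if i = k then l * a else l) else 0 :: real^'n^'n)"
      define L1 where "L1 = D ** transpose Q ** L0"
      have "L1 \<in> S"
        unfolding S_def
      proof (intro CollectI ballI)
        fix u assume u: "u \<in> U"
        define x where "x = L0 *v u"
        define y where "y = transpose Q *v x"
        have nx: "norm x \<le> 1" using L0(1) u unfolding S_def x_def by auto
        have ny: "norm y = norm x" unfolding y_def using orth_norm[of "transpose Q" x] Q(1) orthogonal_matrix_transpose by metis
        have yk: "y $ k = x \<bullet> w"
          unfolding y_def cart_eq_inner_axis transpose_matrix_vector dot_lmul_matrix Q(2) ..
        have ykb: "\<bar>y $ k\<bar> \<le> t" using tb[OF u] yk unfolding x_def by simp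
        have L1u: "L1 *v u = l *\<^sub>R (y + ((a - 1) * y$k) *\<^sub>R axis k 1)"
          unfolding L1_def y_def x_def D_def matrix_vector_mul_assoc[symmetric] diag_mv ..
        have a2: "a^2 = 1 + d" unfolding a_def using d0 by simp
        have "(norm (y + ((a - 1) * y$k) *\<^sub>R axis k 1))^2
              = (norm y)^2 + 2 * ((a - 1) * y$k) * (y \<bullet> axis k 1) + ((a - 1) * y$k)^2"
          by (rule norm_add_sq) simp
        also have "\<dots> = (norm y)^2 + d * (y$k)^2"
        proof -
          have eq: "2 * ((a - 1) * Y) * Y + ((a - 1) * Y)^2 = (a^2 - 1) * Y^2" for Y :: real
            by (simp add: power2_eq_square algebra_simps)
          show ?thesis using eq[of "y$k"] a2 by (simp add: cart_eq_inner_axis[symmetric])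
        qed
        also have "\<dots> \<le> 1 + d * t^2"
        proof (rule add_mono)
          show "(norm y)^2 \<le> 1" using nx ny by (simp add: power_le_one)
          have "(y$k)^2 \<le> t^2" using ykb by (metis abs_ge_zero power2_abs power_mono)
          then show "d * (y$k)^2 \<le> d * t^2" using d0 by simp
        qed
        finally have "norm (y + ((a - 1) * y$k) *\<^sub>R axis k 1) \<le> sqrt (1 + d * t^2)"
          by (simp add: real_le_rsqrt)
        then show "norm (L1 *v u) \<le> 1"
          unfolding L1u using l0 unfolding l_def by (simp add: divide_le_eq add_pos_nonneg d0 t0)
      qed
      then have le: "\<bar>det L1\<bar> \<le> \<bar>det L0\<bar>" by (rule L0(2))
      have dQ: "\<bar>det (transpose Q)\<bar> = 1" using det_orthogonal_matrix[OF Q(1)] by auto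
      have dL1: "\<bar>det L1\<bar> = l ^ CARD('n) * a * \<bar>det L0\<bar>"
        unfolding L1_def D_def det_mul diag_det abs_mult dQ using l0 d0
        by (simp add: a_def abs_mult)
      have "p * d \<le> 1 * d" using p1 d0 by (intro mult_right_mono) auto
      also have "\<dots> < 1" using p0 unfolding d_def by simp
      finally have pd1: "p * d < 1" .
      have "(1 + d * t^2)^CARD('n) * (1 - real CARD('n) * (d * t^2)) \<le> 1"
      proof (rule pow_bound)
        show "0 \<le> d * t^2" using d0 by simp
        have "real CARD('n) * (d * t^2) = p * d" unfolding p_def by simp
        then show "real CARD('n) * (d * t^2) < 1" using pd1 by linarith
      qed
      moreover have "real CARD('n) * (d * t^2) = p * d" unfolding p_def by simp
      moreover have gt: "(1 + d) * (1 - p * d) > 1"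
      proof -
        have e1: "1 - p - p*d = (1-p)*(2-p)/2" unfolding d_def by (simp add: field_simps)
        have "(1-p)*(2-p)/2 > 0" using p1 by simp
        then have "d * (1 - p - p*d) > 0" using d0 e1 by simp
        moreover have "(1 + d) * (1 - p * d) = 1 + d * (1 - p - p*d)" by (simp add: algebra_simps)
        ultimately show ?thesis by simp
      qed
      ultimately have "(1 + d * t^2)^CARD('n) * (1 - p * d) < (1 + d) * (1 - p * d)" by simp
      then have pw: "(1 + d * t^2)^CARD('n) < 1 + d"
        by (rule mult_right_less_imp_less) (use pd1 in simp)
      have "sqrt (1 + d * t^2) ^ CARD('n) < a"
        unfolding a_def real_sqrt_power[symmetric] using pw by simp
      then have "l ^ CARD('n) * a > 1"
        unfolding l_def using d0 by (simp add: power_divide field_simps add_pos_nonneg)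
      then have "\<bar>det L1\<bar> > \<bar>det L0\<bar>" unfolding dL1 using \<open>det L0 \<noteq> 0\<close> by simp
      then show False using le by simp
    qed
  qed
  define c where "c = root 4 ?n * sqrt \<Delta>"
  have n0: "?n > 0" by simp
  have cpos: "c > 0" unfolding c_def using n0 Dpos by simp
  have c2: "c^2 = sqrt ?n * \<Delta>"
  proof -
    have "(root 4 ?n)^2 = sqrt ?n"
      by (metis n0 less_imp_le real_root_pow_pos2 real_sqrt_unique zero_less_numeral
          power_mult[of _ 2 2] num_double numeral_times_numeral mult_2 real_root_ge_zero
          zero_le_power2 power2_eq_square numeral_Bit0 zero_less_power)
    then show ?thesis unfolding c_def using D0 by (simp add: power_mult_distrib)
  qed
  have invc: "invertible (c *\<^sub>R L0)" using scalar_invertible[OF _ invL0] cpos by simp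
  have mic: "matrix_inv (c *\<^sub>R L0) = (1/c) *\<^sub>R Mi"
  proof -
    let ?M = "matrix_inv (c *\<^sub>R L0)"
    have "?M = ?M ** ((c *\<^sub>R L0) ** ((1/c) *\<^sub>R Mi))"
      using Mi cpos by (simp add: matrix_scalar_ac)
    also have "\<dots> = (?M ** (c *\<^sub>R L0)) ** ((1/c) *\<^sub>R Mi)" by (simp add: matrix_mul_assoc)
    also have "\<dots> = (1/c) *\<^sub>R Mi" using minv[OF invc] by simp
    finally show ?thesis .
  qed
  show ?thesis
  proof (intro exI conjI ballI)
    show "invertible (c *\<^sub>R L0)" by (rule invc)
    fix u assume "u \<in> U"
    then have "norm (L0 *v u) \<le> 1" using L0(1) unfolding S_def by auto
    then show "norm ((c *\<^sub>R L0) *v u) \<le> root 4 ?n * sqrt \<Delta>"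
      using cpos by (simp flip: scaleR_matrix_vector_assoc add: c_def[symmetric] mult_left_le)
  next
    fix v assume v: "v \<in> V"
    have "norm (transpose (matrix_inv (c *\<^sub>R L0)) *v v) = (1/c) * norm (transpose Mi *v v)"
      using cpos by (simp add: mic transpose_scalar flip: scaleR_matrix_vector_assoc)
    also have "\<dots> \<le> (1/c) * (sqrt ?n * \<Delta>)" using key[OF v] cpos by (simp add: divide_right_mono)
    also have "\<dots> = c" using c2 cpos by (metis power2_eq_square nonzero_mult_div_cancel_left less_irrefl times_divide_eq_right mult.commute div_by_1 divide_divide_eq_left mult_1 divide_self_if)
    finally show "norm (transpose (matrix_inv (c *\<^sub>R L0)) *v v) \<le> root 4 ?n * sqrt \<Delta>"
      unfolding c_def .
  qed
qed

end
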